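(* Fix an integer $b\ge2$, $\gamma\in(0,1)$, let $\phi$ be a real analytic $\mathbb{Z}$-periodic function satisfying condition (H), and assume $\alpha<\min\{1,\frac{\log b}{\log(1/\gamma)}\}$. Then there exist $x_2\in[0,1]$ and $\mathbf{u}\in\Sigma$ with $S'(x_2,\mathbf{u})\neq0$.
   Context: $\Lambda=\{0,\dots,b-1\}$, $\Sigma=\Lambda^{\mathbb{Z}_+}$, $\nu$ uniform on $\Lambda$. $S(x,\mathbf{j})=\sum_{n\ge1}\gamma^{n-1}\phi\big(\frac{x+j_1+j_2b+\cdots+j_nb^{n-1}}{b^n}\big)$ and $S'$ denotes the derivative in $x$. Condition (H): for all $\mathbf{i}\neq\mathbf{j}\in\Sigma$, $x\mapsto S(x,\mathbf{j})-S(x,\mathbf{i})$ is not identically zero. $\alpha$ is the constant such that for Lebesgue-a.e. $x$, the image $m_x$ of $\nu^{\mathbb{Z}_+}$ under $\mathbf{j}\mapsto S(x,\mathbf{j})$ is exact dimensional with dimension $\alpha$. *)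

theory Defs
  imports "HOL-Probability.Probability"
begin

text \<open>Sequences j = (j_1, j_2, ...) are encoded as functions nat => nat with
  j k representing j_(k+1). The symbolic space Sigma = Lambda^(Z_+).\<close>

definition Sigma_b :: "nat \<Rightarrow> (nat \<Rightarrow> nat) set" where
  "Sigma_b b = {j. \<forall>k. j k < b}"

text \<open>S(x,j) = sum_(n>=1) gamma^(n-1) phi((x + j_1 + j_2 b + ... + j_n b^(n-1)) / b^n).\<close>

definition S_fun :: "nat \<Rightarrow> real \<Rightarrow> (real \<Rightarrow> real) \<Rightarrow> real \<Rightarrow> (nat \<Rightarrow> nat) \<Rightarrow> real" where
  "S_fun b \<gamma> \<phi> x j =
     (\<Sum>n. \<gamma> ^ n * \<phi> ((x + (\<Sum>k<Suc n. real (j k) * real b ^ k)) / real b ^ Suc n))"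

definition bernoulli_b :: "nat \<Rightarrow> (nat \<Rightarrow> nat) measure" where
  "bernoulli_b b = (\<Pi>\<^sub>M k\<in>UNIV. measure_pmf (pmf_of_set {..<b}))"

definition proj_measure :: "nat \<Rightarrow> real \<Rightarrow> (real \<Rightarrow> real) \<Rightarrow> real \<Rightarrow> real measure" where
  "proj_measure b \<gamma> \<phi> x = distr (bernoulli_b b) borel (\<lambda>j. S_fun b \<gamma> \<phi> x j)"

definition exact_dimensional :: "real measure \<Rightarrow> real \<Rightarrow> bool" where
  "exact_dimensional \<mu> a \<longleftrightarrow>
     (AE y in \<mu>. ((\<lambda>r. ln (measure \<mu> (ball y r)) / ln r) \<longlongrightarrow> a) (at_right 0))"

definition real_analytic :: "(real \<Rightarrow> real) \<Rightarrow> bool" where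
  "real_analytic f \<longleftrightarrow>
     (\<forall>x0. \<exists>r>0. \<exists>c::nat \<Rightarrow> real. \<forall>y. \<bar>y - x0\<bar> < r \<longrightarrow>
        (\<lambda>n. c n * (y - x0) ^ n) sums f y)"

definition condition_H :: "nat \<Rightarrow> real \<Rightarrow> (real \<Rightarrow> real) \<Rightarrow> bool" where
  "condition_H b \<gamma> \<phi> \<longleftrightarrow>
     (\<forall>i\<in>Sigma_b b. \<forall>j\<in>Sigma_b b. i \<noteq> j \<longrightarrow>
        (\<lambda>x. S_fun b \<gamma> \<phi> x j - S_fun b \<gamma> \<phi> x i) \<noteq> (\<lambda>x. 0))"

end

theory Submission
  imports Defs
begin

lemma analytic_deriv:
  assumes "real_analytic f"
  shows "(f has_real_derivative deriv f x0) (at x0) \<and> isCont (deriv f) x0"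
proof -
  obtain r c where r: "r > 0" and c: "\<And>y. \<bar>y - x0\<bar> < r \<Longrightarrow> (\<lambda>n. c n * (y - x0) ^ n) sums f y"
    using assms unfolding real_analytic_def by blast
  define g where "g z = (\<Sum>n. c n * z ^ n)" for z :: real
  define h where "h z = (\<Sum>n. diffs c n * z ^ n)" for z :: real
  have sm: "summable (\<lambda>n. c n * z ^ n)" if "norm z < r" for z :: real
    using c[of "x0 + z"] that by (auto simp: sums_iff)
  have fg: "f y = g (y - x0)" if "y \<in> ball x0 r" for y
    using c[of y] that by (auto simp: g_def sums_iff dist_real_def)
  have D: "(f has_real_derivative h (y - x0)) (at y)" if y: "y \<in> ball x0 r" for y
  proof -
    define K where "K = (\<bar>y - x0\<bar> + r) / 2"
    have K1: "norm (y - x0) < norm K" and K2: "norm K < r"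
      using y r by (auto simp: K_def dist_real_def)
    have "(g has_real_derivative h (y - x0)) (at (y - x0))"
      unfolding g_def h_def by (rule termdiffs_strong[OF sm[OF K2] K1])
    moreover have "((\<lambda>t. t - x0) has_real_derivative 1) (at y)"
      by (auto intro!: derivative_eq_intros)
    ultimately have "((\<lambda>t. g (t - x0)) has_real_derivative h (y - x0)) (at y)"
      using DERIV_chain[where f=g and g="\<lambda>t. t - x0" and x=y and Da="h (y - x0)" and Db=1 and s=UNIV]
      by (simp add: o_def)
    then show ?thesis
      by (rule has_field_derivative_transform_within_open[where S="ball x0 r"])
         (use y fg in auto)
  qed
  have dd: "deriv f y = h (y - x0)" if "y \<in> ball x0 r" for y
    using D[OF that] by (rule DERIV_imp_deriv)
  have "isCont h 0"
  proof -
    have "summable (\<lambda>n. diffs c n * (r/2) ^ n)"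
      by (rule termdiff_converges[of _ r]) (use r sm in auto)
    then show ?thesis unfolding h_def by (rule isCont_powser) (use r in auto)
  qed
  then have "isCont (\<lambda>y. h (y - x0)) x0"
    using isCont_o2[where g=h and f="\<lambda>y. y - x0" and a=x0] by simp
  moreover have "eventually (\<lambda>y. deriv f y = h (y - x0)) (nhds x0)"
    unfolding eventually_nhds using r dd by (intro exI[of _ "ball x0 r"]) auto
  ultimately have "isCont (deriv f) x0"
    using isCont_cong[where f="deriv f" and g="\<lambda>y. h (y - x0)" and x=x0] by simp
  moreover have "(f has_real_derivative deriv f x0) (at x0)"
    using D[of x0] dd[of x0] r by auto
  ultimately show ?thesis by blast
qed

lemma cont_bound:
  fixes g :: "real \<Rightarrow> real"
  assumes "continuous_on {a..b} g"
  shows "\<exists>B. \<forall>x\<in>{a..b}. \<bar>g x\<bar> \<le> B"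
proof -
  have "compact (g ` {a..b})" by (rule compact_continuous_image[OF assms]) simp
  then have "bounded (g ` {a..b})" by (rule compact_imp_bounded)
  then show ?thesis unfolding bounded_iff by auto
qed

lemma per_int:
  fixes \<phi> :: "real \<Rightarrow> real"
  assumes "\<forall>x. \<phi> (x + 1) = \<phi> x"
  shows "\<phi> (x + real_of_int m) = \<phi> x"
proof -
  have nat: "\<phi> (y + real n) = \<phi> y" for y n
  proof (induction n)
    case (Suc n)
    have "\<phi> (y + real (Suc n)) = \<phi> ((y + real n) + 1)" by (simp add: algebra_simps)
    also have "\<dots> = \<phi> (y + real n)" using assms by blast
    finally show ?case using Suc by simp
  qed simp
  show ?thesis
  proof (cases "m \<ge> 0")
    case True
    then show ?thesis using nat[of x "nat m"] by simp
  next
    case False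
    then have "x = (x + real_of_int m) + real (nat (-m))" by simp
    then show ?thesis using nat[of "x + real_of_int m" "nat (-m)"] by simp
  qed
qed

lemma digits_bound:
  assumes "u \<in> Sigma_b b"
  shows "(\<Sum>k<m. real (u k) * real b ^ k) \<le> real b ^ m - 1"
proof (induction m)
  case 0 then show ?case by simp
next
  case (Suc m)
  have "u m < b" using assms by (auto simp: Sigma_b_def)
  then have "real (u m) \<le> real b - 1" by linarith
  then have "real (u m) * real b ^ m \<le> (real b - 1) * real b ^ m"
    by (intro mult_right_mono) auto
  with Suc show ?case by (simp add: algebra_simps)
qed

lemma self_sim:
  fixes \<phi> :: "real \<Rightarrow> real"
  assumes "b > 0"
  assumes "summable (\<lambda>n. \<gamma> ^ n * \<phi> ((x + (\<Sum>k<Suc n. real (u k) * real b ^ k)) / real b ^ Suc n))"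
  shows "S_fun b \<gamma> \<phi> x u = \<phi> ((x + real (u 0)) / real b) + \<gamma> * S_fun b \<gamma> \<phi> ((x + real (u 0)) / real b) (\<lambda>k. u (Suc k))"
proof -
  define F where "F n = \<gamma> ^ n * \<phi> ((x + (\<Sum>k<Suc n. real (u k) * real b ^ k)) / real b ^ Suc n)" for n
  define y where "y = (x + real (u 0)) / real b"
  define G where "G n = \<gamma> ^ n * \<phi> ((y + (\<Sum>k<Suc n. real (u (Suc k)) * real b ^ k)) / real b ^ Suc n)" for n
  have eq: "F (Suc n) = \<gamma> * G n" for n
  proof -
    have "(\<Sum>k<Suc (Suc n). real (u k) * real b ^ k) = real (u 0) + real b * (\<Sum>k<Suc n. real (u (Suc k)) * real b ^ k)"
      by (subst sum.lessThan_Suc_shift) (simp add: sum_distrib_left algebra_simps)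
    then have "(x + (\<Sum>k<Suc (Suc n). real (u k) * real b ^ k)) / real b ^ Suc (Suc n)
        = (y + (\<Sum>k<Suc n. real (u (Suc k)) * real b ^ k)) / real b ^ Suc n"
      using assms(1) by (simp add: y_def field_simps)
    then show ?thesis by (simp add: F_def G_def)
  qed
  have sF: "summable F" unfolding F_def by (rule assms(2))
  have "summable (\<lambda>n. \<gamma> * G n)" using sF eq summable_Suc_iff[of F] by simp
  have "suminf F = F 0 + (\<Sum>n. F (Suc n))"
    using suminf_split_head[OF sF] by simp
  also have "(\<Sum>n. F (Suc n)) = \<gamma> * suminf G"
  proof (cases "\<gamma> = 0")
    case True then show ?thesis by (simp add: eq)
  next
    case False
    have "summable G"
      using \<open>summable (\<lambda>n. \<gamma> * G n)\<close> False summable_mult[of "\<lambda>n. \<gamma> * G n" "1/\<gamma>"] by simp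
    then show ?thesis by (simp add: eq suminf_mult)
  qed
  finally have "suminf F = F 0 + \<gamma> * suminf G" .
  moreover have "S_fun b \<gamma> \<phi> x u = suminf F" unfolding S_fun_def F_def ..
  moreover have "S_fun b \<gamma> \<phi> y (\<lambda>k. u (Suc k)) = suminf G" unfolding S_fun_def G_def ..
  moreover have "F 0 = \<phi> y" by (simp add: F_def y_def)
  ultimately show ?thesis by (simp add: y_def)
qed

lemma arg_range:
  assumes b: "b \<ge> 2" and u: "u \<in> Sigma_b b" and t: "t \<in> {-1..2::real}"
  shows "(t + (\<Sum>k<Suc n. real (u k) * real b ^ k)) / real b ^ Suc n \<in> {-1..2}"
proof -
  define N where "N = (\<Sum>k<Suc n. real (u k) * real b ^ k)"
  define B where "B = real b ^ Suc n"
  have N1: "N \<le> B - 1" unfolding N_def B_def by (rule digits_bound[OF u])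
  have N0: "N \<ge> 0" unfolding N_def by (intro sum_nonneg) auto
  have "real b \<ge> 1" using b by simp
  then have B1: "B \<ge> 1" unfolding B_def by (rule one_le_power)
  have "(t + N) / B \<ge> -1" using B1 N0 t by (simp add: le_divide_eq)
  moreover have "(t + N) / B \<le> 2" using B1 N1 t by (simp add: divide_le_eq)
  ultimately show ?thesis by (simp add: N_def B_def)
qed

lemma S_deriv:
  fixes \<phi> \<phi>' :: "real \<Rightarrow> real"
  assumes b: "b \<ge> 2" and g0: "0 < \<gamma>" and g1: "\<gamma> < 1" and u: "u \<in> Sigma_b b"
    and dphi: "\<And>y. (\<phi> has_real_derivative \<phi>' y) (at y)"
    and Bd: "\<And>y. y \<in> {-1..2} \<Longrightarrow> \<bar>\<phi>' y\<bar> \<le> Bd"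
    and Bp: "\<And>y. y \<in> {-1..2} \<Longrightarrow> \<bar>\<phi> y\<bar> \<le> Bp"
    and x: "x \<in> {-1<..<2}"
  shows "summable (\<lambda>n. \<gamma> ^ n * \<phi> ((x + (\<Sum>k<Suc n. real (u k) * real b ^ k)) / real b ^ Suc n))"
    "((\<lambda>t. S_fun b \<gamma> \<phi> t u) has_real_derivative
       (\<Sum>n. \<gamma> ^ n * (\<phi>' ((x + (\<Sum>k<Suc n. real (u k) * real b ^ k)) / real b ^ Suc n) * (1 / real b ^ Suc n)))) (at x)"
proof -
  define N where "N n = (\<Sum>k<Suc n. real (u k) * real b ^ k)" for n
  define f where "f n t = \<gamma> ^ n * \<phi> ((t + N n) / real b ^ Suc n)" for n t
  define f' where "f' n t = \<gamma> ^ n * (\<phi>' ((t + N n) / real b ^ Suc n) * (1 / real b ^ Suc n))" for n t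
  have rng: "(t + N n) / real b ^ Suc n \<in> {-1..2}" if "t \<in> {-1..2}" for t n
    unfolding N_def by (rule arg_range[OF b u that])
  have bpos: "real b ^ Suc n > 0" for n using b by simp
  have bge1: "real b ^ Suc n \<ge> 1" for n using b by (intro one_le_power) simp
  have der: "(f n has_real_derivative f' n t) (at t within {-1..2})" for n t
  proof -
    have "((\<lambda>t. (t + N n) / real b ^ Suc n) has_real_derivative 1 / real b ^ Suc n) (at t)"
      using b by (auto intro!: derivative_eq_intros)
    from DERIV_chain[OF dphi this]
    have "((\<lambda>t. \<phi> ((t + N n) / real b ^ Suc n)) has_real_derivative
            \<phi>' ((t + N n) / real b ^ Suc n) * (1 / real b ^ Suc n)) (at t)"
      by (simp add: o_def)
    then have "(f n has_real_derivative f' n t) (at t)"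
      unfolding f_def f'_def by (rule DERIV_cmult)
    then show ?thesis by (rule has_field_derivative_at_within)
  qed
  have unif: "uniformly_convergent_on {-1..2} (\<lambda>n t. \<Sum>i<n. f' i t)"
  proof (rule Weierstrass_m_test'[where M="\<lambda>n. \<gamma> ^ n * Bd"])
    fix n and t :: real assume t: "t \<in> {-1..2}"
    have a: "\<bar>\<phi>' ((t + N n) / real b ^ Suc n)\<bar> \<le> Bd" using Bd rng[OF t] by blast
    have Bd0: "Bd \<ge> 0" using Bd[of 0] by simp
    have c1: "1 / real b ^ Suc n \<le> 1" using bge1[of n] by simp
    have c0: "1 / real b ^ Suc n \<ge> 0" using bpos[of n] by simp
    have "\<bar>\<phi>' ((t + N n) / real b ^ Suc n) * (1 / real b ^ Suc n)\<bar>
        = \<bar>\<phi>' ((t + N n) / real b ^ Suc n)\<bar> * (1 / real b ^ Suc n)"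
      using c0 by (simp add: abs_mult)
    also have "\<dots> \<le> Bd * (1 / real b ^ Suc n)" by (rule mult_right_mono[OF a c0])
    also have "\<dots> \<le> Bd" using mult_left_mono[OF c1 Bd0] by simp
    finally have "\<bar>\<phi>' ((t + N n) / real b ^ Suc n) * (1 / real b ^ Suc n)\<bar> \<le> Bd" .
    then have "\<gamma> ^ n * \<bar>\<phi>' ((t + N n) / real b ^ Suc n) * (1 / real b ^ Suc n)\<bar> \<le> \<gamma> ^ n * Bd"
      by (rule mult_left_mono) (use g0 in simp)
    moreover have "\<bar>\<gamma> ^ n\<bar> = \<gamma> ^ n" using g0 by simp
    ultimately have "\<bar>\<gamma> ^ n\<bar> * \<bar>\<phi>' ((t + N n) / real b ^ Suc n) * (1 / real b ^ Suc n)\<bar> \<le> \<gamma> ^ n * Bd"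
      by simp
    then show "norm (f' n t) \<le> \<gamma> ^ n * Bd"
      by (simp only: f'_def real_norm_def abs_mult)
  next
    show "summable (\<lambda>n. \<gamma> ^ n * Bd)"
      using g0 g1 by (intro summable_mult2 summable_geometric) auto
  qed
  have s0: "summable (\<lambda>n. f n 0)"
  proof (rule summable_comparison_test'[where g="\<lambda>n. \<gamma> ^ n * Bp"])
    show "summable (\<lambda>n. \<gamma> ^ n * Bp)"
      using g0 g1 by (intro summable_mult2 summable_geometric) auto
    fix n
    have "\<bar>\<phi> ((0 + N n) / real b ^ Suc n)\<bar> \<le> Bp" using Bp rng[of 0 n] by auto
    then have "\<gamma> ^ n * \<bar>\<phi> ((0 + N n) / real b ^ Suc n)\<bar> \<le> \<gamma> ^ n * Bp"
      by (rule mult_left_mono) (use g0 in simp)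
    moreover have "\<bar>\<gamma> ^ n\<bar> = \<gamma> ^ n" using g0 by simp
    ultimately have "\<bar>\<gamma> ^ n\<bar> * \<bar>\<phi> ((0 + N n) / real b ^ Suc n)\<bar> \<le> \<gamma> ^ n * Bp"
      by simp
    then show "norm (f n 0) \<le> \<gamma> ^ n * Bp"
      by (simp only: f_def real_norm_def abs_mult)
  qed
  have xi: "x \<in> interior {-1..2::real}" using x by simp
  note R = has_field_derivative_series'[OF convex_real_interval(5) der unif _ s0 xi]
  show "summable (\<lambda>n. \<gamma> ^ n * \<phi> ((x + (\<Sum>k<Suc n. real (u k) * real b ^ k)) / real b ^ Suc n))"
    using R(1) by (simp add: f_def N_def)
  have "(\<lambda>t. S_fun b \<gamma> \<phi> t u) = (\<lambda>t. \<Sum>n. f n t)"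
    by (simp add: S_fun_def f_def N_def)
  then show "((\<lambda>t. S_fun b \<gamma> \<phi> t u) has_real_derivative
       (\<Sum>n. \<gamma> ^ n * (\<phi>' ((x + (\<Sum>k<Suc n. real (u k) * real b ^ k)) / real b ^ Suc n) * (1 / real b ^ Suc n)))) (at x)"
    using R(2) by (simp add: f'_def N_def)
qed

theorem lemma6p2:
  fixes b :: nat and \<gamma> :: real and \<phi> :: "real \<Rightarrow> real" and \<alpha> :: real
  assumes "b \<ge> 2"
    and "0 < \<gamma>" and "\<gamma> < 1"
    and "real_analytic \<phi>"
    and "\<forall>x. \<phi> (x + 1) = \<phi> x"
    and "condition_H b \<gamma> \<phi>"
    and "AE x in lborel. exact_dimensional (proj_measure b \<gamma> \<phi> x) \<alpha>"
    and "\<alpha> < min 1 (ln (real b) / ln (1 / \<gamma>))"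
  shows "\<exists>x2\<in>{0..1}. \<exists>u\<in>Sigma_b b. \<exists>d. ((\<lambda>t. S_fun b \<gamma> \<phi> t u) has_real_derivative d) (at x2) \<and> d \<noteq> 0"
proof (rule ccontr)
  assume nz: "\<not> ?thesis"
  note b = assms(1) and g0 = assms(2) and g1 = assms(3)
  have b0: "real b > 0" using b by simp
  have dphi: "\<And>y. (\<phi> has_real_derivative deriv \<phi> y) (at y)"
    and cd: "\<And>y. isCont (deriv \<phi>) y"
    using analytic_deriv[OF assms(4)] by blast+
  have cp: "isCont \<phi> y" for y using dphi[of y] by (rule DERIV_isCont)
  obtain Bd where Bd: "\<And>y. y \<in> {-1..2} \<Longrightarrow> \<bar>deriv \<phi> y\<bar> \<le> Bd"
    using cont_bound[of "-1" 2 "deriv \<phi>"] cd continuous_at_imp_continuous_on by blast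
  obtain Bp where Bp: "\<And>y. y \<in> {-1..2} \<Longrightarrow> \<bar>\<phi> y\<bar> \<le> Bp"
    using cont_bound[of "-1" 2 \<phi>] cp continuous_at_imp_continuous_on by blast
  have SD1: "summable (\<lambda>n. \<gamma> ^ n * \<phi> ((x + (\<Sum>k<Suc n. real (u k) * real b ^ k)) / real b ^ Suc n))"
    if "u \<in> Sigma_b b" "x \<in> {-1<..<2}" for u x
    by (rule S_deriv(1)[OF b g0 g1 that(1) dphi Bd Bp that(2)])
  have SD2: "((\<lambda>t. S_fun b \<gamma> \<phi> t u) has_real_derivative
       (\<Sum>n. \<gamma> ^ n * (deriv \<phi> ((x + (\<Sum>k<Suc n. real (u k) * real b ^ k)) / real b ^ Suc n) * (1 / real b ^ Suc n)))) (at x)"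
    if "u \<in> Sigma_b b" "x \<in> {-1<..<2}" for u x
    by (rule S_deriv(2)[OF b g0 g1 that(1) dphi Bd Bp that(2)])
  have const: "S_fun b \<gamma> \<phi> x u = S_fun b \<gamma> \<phi> 0 u" if u: "u \<in> Sigma_b b" and x: "x \<in> {0..1}" for u x
  proof -
    have cont: "continuous_on {0..1} (\<lambda>t. S_fun b \<gamma> \<phi> t u)"
    proof (intro continuous_at_imp_continuous_on ballI)
      fix t :: real assume "t \<in> {0..1}"
      then have "t \<in> {-1<..<2}" by auto
      from SD2[OF u this] show "isCont (\<lambda>t. S_fun b \<gamma> \<phi> t u) t" by (rule DERIV_isCont)
    qed
    have "((\<lambda>t. S_fun b \<gamma> \<phi> t u) has_real_derivative 0) (at t)" if "0 < t" "t < 1" for t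
    proof -
      have "t \<in> {-1<..<2}" using that by auto
      note d = SD2[OF u this]
      have H: "\<And>d. ((\<lambda>t. S_fun b \<gamma> \<phi> t u) has_real_derivative d) (at t) \<Longrightarrow> d = 0"
      proof -
        fix d assume dd: "((\<lambda>t. S_fun b \<gamma> \<phi> t u) has_real_derivative d) (at t)"
        have t01: "t \<in> {0..1}" using that by auto
        show "d = 0"
        proof (rule ccontr)
          assume "d \<noteq> 0"
          then have "\<exists>x2\<in>{0..1}. \<exists>u\<in>Sigma_b b. \<exists>d. ((\<lambda>t. S_fun b \<gamma> \<phi> t u) has_real_derivative d) (at x2) \<and> d \<noteq> 0"
            using dd u t01 by blast
          with nz show False by blast
        qed
      qed
      note e = H[OF d]
      from d show ?thesis by (subst (asm) e)
    qed
    then show ?thesis using DERIV_isconst2[of 0 1 "\<lambda>t. S_fun b \<gamma> \<phi> t u" x] cont x by auto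
  qed
  have loc: "\<phi> ((x + real k) / real b) = \<phi> (real k / real b)" if k: "k < b" and x: "x \<in> {0..1}" for k x
  proof -
    define u where "u = (\<lambda>i::nat. if i = 0 then k else 0)"
    have u: "u \<in> Sigma_b b" using k by (auto simp: u_def Sigma_b_def)
    have z: "(\<lambda>_::nat. 0::nat) \<in> Sigma_b b" using b by (auto simp: Sigma_b_def)
    have sh: "(\<lambda>i. u (Suc i)) = (\<lambda>_. 0)" by (auto simp: u_def)
    have ss: "S_fun b \<gamma> \<phi> t u = \<phi> ((t + real k) / real b) + \<gamma> * S_fun b \<gamma> \<phi> ((t + real k) / real b) (\<lambda>_. 0)"
      if "t \<in> {0..1}" for t
    proof -
      have "t \<in> {-1<..<2}" using that by auto
      from self_sim[OF _ SD1[OF u this]] b show ?thesis by (simp add: sh u_def)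
    qed
    have in01: "(t + real k) / real b \<in> {0..1}" if "t \<in> {0..1}" for t
      using that k b0 by (auto simp: divide_le_eq)
    have "\<phi> ((x + real k) / real b) = S_fun b \<gamma> \<phi> x u - \<gamma> * S_fun b \<gamma> \<phi> 0 (\<lambda>_. 0)"
      using ss[OF x] const[OF z in01[OF x]] by simp
    also have "\<dots> = S_fun b \<gamma> \<phi> 0 u - \<gamma> * S_fun b \<gamma> \<phi> 0 (\<lambda>_. 0)"
      using const[OF u x] by simp
    also have "\<dots> = \<phi> ((0 + real k) / real b)"
      using ss[of 0] const[OF z in01[of 0]] by simp
    finally show ?thesis by simp
  qed
  have ind: "\<forall>t\<in>{0..real k / real b}. \<phi> t = \<phi> 0" if "k \<le> b" for k
    using that
  proof (induction k)
    case 0 then show ?case by simp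
  next
    case (Suc k)
    have kb: "k \<le> b" using Suc.prems by simp
    have IH: "\<forall>t\<in>{0..real k / real b}. \<phi> t = \<phi> 0" by (rule Suc.IH[OF kb])
    show ?case
    proof
      fix t assume t: "t \<in> {0..real (Suc k) / real b}"
      show "\<phi> t = \<phi> 0"
      proof (cases "t \<le> real k / real b")
        case True
        then have "t \<in> {0..real k / real b}" using t by simp
        then show ?thesis using IH by blast
      next
        case False
        define x where "x = real b * t - real k"
        have "real k < real b * t" using False b0 by (simp add: not_le pos_divide_less_eq mult.commute)
        moreover have "real b * t \<le> real k + 1" using t b0 by (simp add: le_divide_eq mult.commute)
        ultimately have x: "x \<in> {0..1}" by (simp add: x_def)
        have kb': "k < b" using Suc.prems by simp
        have teq: "t = (x + real k) / real b" using b0 unfolding x_def by (simp add: field_simps)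
        have "\<phi> t = \<phi> (real k / real b)" by (subst teq) (rule loc[OF kb' x])
        moreover have "real k / real b \<in> {0..real k / real b}" using b0 by simp
        ultimately have "\<phi> t = \<phi> (real k / real b)" "\<phi> (real k / real b) = \<phi> 0" using IH by blast+
        then show "\<phi> t = \<phi> 0" by simp
      qed
    qed
  qed
  define c where "c = \<phi> 0"
  have all: "\<phi> t = c" for t
  proof -
    have bb: "real b / real b = 1" using b0 by simp
    have "frac t \<in> {0..real b / real b}" unfolding bb using frac_lt_1[of t] frac_ge_0[of t] by simp
    moreover have "\<forall>t\<in>{0..real b / real b}. \<phi> t = \<phi> 0" by (rule ind) simp
    ultimately have "\<phi> (frac t) = \<phi> 0" by blast
    have tt: "frac t + real_of_int \<lfloor>t\<rfloor> = t" by (simp add: frac_def)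
    have "\<phi> (frac t + real_of_int \<lfloor>t\<rfloor>) = \<phi> (frac t)" by (rule per_int[OF assms(5)])
    then show ?thesis using tt \<open>\<phi> (frac t) = \<phi> 0\<close> unfolding c_def by simp
  qed
  have Sc: "S_fun b \<gamma> \<phi> x u = c / (1 - \<gamma>)" for x u
  proof -
    have "(\<lambda>n. \<gamma> ^ n * c) sums (1 / (1 - \<gamma>) * c)"
      using geometric_sums[of \<gamma>] g0 g1 by (intro sums_mult2) auto
    then show ?thesis by (simp add: S_fun_def all sums_iff)
  qed
  define i where "i = (\<lambda>_::nat. 0::nat)"
  define j where "j = (\<lambda>k::nat. if k = 0 then 1 else 0::nat)"
  have "i \<in> Sigma_b b" "j \<in> Sigma_b b" "i \<noteq> j" using b
    by (auto simp: i_def j_def Sigma_b_def fun_eq_iff)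
  with assms(6) have "(\<lambda>x. S_fun b \<gamma> \<phi> x j - S_fun b \<gamma> \<phi> x i) \<noteq> (\<lambda>x. 0)"
    unfolding condition_H_def by blast
  then show False by (simp add: Sc)
qed

end
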